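(* Let $p\ge 1$, let $k_j>0$, let $\Gamma$ be a real symmetric positive definite $p\times p$ matrix, and let $B$ be a real symmetric $p\times p$ matrix. Consider the optimization problem \[ \max_{Y\in\mathbb{S}_+^p}\; -\operatorname{tr}\big(Y\Gamma^{-1}\big)+k_j\log\det\Big(B+\tfrac{1}{k_j}Y\Big)\quad\text{subject to}\quad -k_jB\prec Y . \] Then an optimal solution of this problem is \[ Y^\ast=k_j\,\Gamma^{1/2}\,\mathrm{proj}_{\mathbb{S}_+^p}\Big(I-\Gamma^{-1/2}B\Gamma^{-1/2}\Big)\,\Gamma^{1/2}. \]
   Context: $\mathbb{S}_+^p$ denotes the set of real symmetric positive semi-definite $p\times p$ matrices. For symmetric matrices $X,Y$, $X\prec Y$ means $Y-X$ is positive definite; $I$ is the identity. $\Gamma^{1/2}$ is the symmetric positive definite square root of $\Gamma$ and $\Gamma^{-1/2}$ its inverse. $\mathrm{proj}_{\mathbb{S}_+^p}$ is the Frobenius-norm orthogonal projection onto $\mathbb{S}_+^p$ (for a symmetric matrix with eigen-decomposition $U\mathrm{diag}(\lambda)U^{\mathsf T}$ it equals $U\mathrm{diag}(\max(\lambda,0))U^{\mathsf T}$). *)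

theory Defs
  imports "HOL-Analysis.Analysis"
begin

type_synonym 'n sqmat = "real^'n^'n"

definition symmetric_mat :: "real^'n^'n \<Rightarrow> bool" where
  "symmetric_mat A \<longleftrightarrow> transpose A = A"

definition psd_mat :: "real^'n^'n \<Rightarrow> bool" where
  "psd_mat A \<longleftrightarrow> symmetric_mat A \<and> (\<forall>x. 0 \<le> x \<bullet> (A *v x))"

definition pd_mat :: "real^'n^'n \<Rightarrow> bool" where
  "pd_mat A \<longleftrightarrow> symmetric_mat A \<and> (\<forall>x. x \<noteq> 0 \<longrightarrow> 0 < x \<bullet> (A *v x))"

definition loewner_less :: "real^'n^'n \<Rightarrow> real^'n^'n \<Rightarrow> bool" where
  "loewner_less X Y \<longleftrightarrow> symmetric_mat X \<and> symmetric_mat Y \<and> pd_mat (Y - X)"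

definition mat_sqrt :: "real^'n^'n \<Rightarrow> real^'n^'n" where
  "mat_sqrt G = (THE S. pd_mat S \<and> S ** S = G)"

definition frob_norm :: "real^'n^'n \<Rightarrow> real" where
  "frob_norm A = sqrt (\<Sum>i\<in>UNIV. \<Sum>j\<in>UNIV. (A $ i $ j)^2)"

definition proj_psd :: "real^'n^'n \<Rightarrow> real^'n^'n" where
  "proj_psd X = (THE P. psd_mat P \<and> (\<forall>Q. psd_mat Q \<longrightarrow> frob_norm (X - P) \<le> frob_norm (X - Q)))"

definition objective :: "real \<Rightarrow> real^'n^'n \<Rightarrow> real^'n^'n \<Rightarrow> real^'n^'n \<Rightarrow> real" where
  "objective k G B Y = - trace (Y ** matrix_inv G) + k * ln (det (B + (1/k) *\<^sub>R Y))"

definition feasible :: "real \<Rightarrow> real^'n^'n \<Rightarrow> real^'n^'n \<Rightarrow> bool" where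
  "feasible k B Y \<longleftrightarrow> psd_mat Y \<and> loewner_less (- (k *\<^sub>R B)) Y"

end

theory Submission
  imports Defs
begin



lemma inner_mat_transpose:
  fixes A :: "real^'n^'n"
  shows "(A *v x) \<bullet> y = x \<bullet> (transpose A *v y)"
  by (simp add: inner_vec_def matrix_vector_mult_def transpose_def sum_distrib_left
       sum_distrib_right mult_ac) (rule sum.swap)

lemma sym_inner:
  fixes A :: "real^'n^'n"
  assumes "symmetric_mat A"
  shows "(A *v x) \<bullet> y = x \<bullet> (A *v y)"
  using assms inner_mat_transpose[of A x y] by (simp add: symmetric_mat_def)

lemma eig_step:
  fixes A :: "real^'n^'n" and V :: "(real^'n) set"
  assumes sym: "symmetric_mat A" and fin: "finite V" and card: "card V < CARD('n)"
    and eig: "\<And>v. v \<in> V \<Longrightarrow> \<exists>l. A *v v = l *\<^sub>R v"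
  shows "\<exists>u l. norm u = 1 \<and> (\<forall>v\<in>V. u \<bullet> v = 0) \<and> A *v u = l *\<^sub>R u"
proof -
  define W where "W = (\<Inter>v\<in>V. {x. inner v x = 0})"
  define K where "K = sphere (0::real^'n) 1 \<inter> W"
  have "dim V \<le> card V" using fin by (simp add: dim_le_card')
  then have "dim V < DIM(real^'n)" using card by simp
  then obtain x where x: "x \<noteq> 0" "\<And>y. y \<in> span V \<Longrightarrow> orthogonal x y"
    using orthogonal_to_subspace_exists[OF \<open>dim V < DIM(real^'n)\<close>] by blast
  have "x /\<^sub>R norm x \<in> K" using x
    by (auto simp: K_def W_def orthogonal_def span_base inner_commute)
  then have Kne: "K \<noteq> {}" by auto
  have Kc: "compact K" unfolding K_def W_def
    by (intro compact_Int_closed compact_sphere closed_INT) (auto intro: closed_hyperplane)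
  have cont: "continuous_on K (\<lambda>x. x \<bullet> (A *v x))"
    by (intro continuous_intros linear_continuous_on linear_conv_bounded_linear[THEN iffD1]) auto
  obtain u where uK: "u \<in> K" and umax: "\<And>y. y \<in> K \<Longrightarrow> y \<bullet> (A *v y) \<le> u \<bullet> (A *v u)"
    using continuous_attains_sup[OF Kc Kne cont] by blast
  have nu: "norm u = 1" and uW: "\<And>v. v \<in> V \<Longrightarrow> u \<bullet> v = 0"
    using uK by (auto simp: K_def W_def inner_commute)
  have uu: "u \<bullet> u = 1" using nu by (simp add: norm_eq_1)
  define q where "q = u \<bullet> (A *v u)"
  define w where "w = A *v u - q *\<^sub>R u"
  have Winv: "\<And>v. v \<in> V \<Longrightarrow> (A *v u) \<bullet> v = 0"
  proof -
    fix v assume "v \<in> V"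
    then obtain l where "A *v v = l *\<^sub>R v" using eig by blast
    then show "(A *v u) \<bullet> v = 0" using sym_inner[OF sym, of u v] uW[OF \<open>v\<in>V\<close>] by simp
  qed
  have wW: "\<And>v. v \<in> V \<Longrightarrow> w \<bullet> v = 0"
    using Winv uW by (simp add: w_def inner_diff_left)
  have wu: "w \<bullet> u = 0"
    using sym_inner[OF sym, of u u] uu by (simp add: w_def inner_diff_left q_def)
  have wAu: "w \<bullet> (A *v u) = w \<bullet> w"
    using wu by (simp add: w_def inner_diff_right)
  define a where "a = w \<bullet> w"
  define c where "c = w \<bullet> (A *v w) - q * a"
  have key: "2 * t * a + t^2 * c \<le> 0" for t :: real
  proof -
    define z where "z = u + t *\<^sub>R w"
    have zz: "z \<bullet> z = 1 + t^2 * a"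
      using uu wu by (simp add: z_def a_def inner_add_left inner_add_right inner_commute power2_eq_square)
    have zpos: "0 < z \<bullet> z" using zz by (simp add: a_def add_pos_nonneg)
    have nz: "norm z > 0" using zpos by (simp add: inner_gt_zero_iff)
    have "z /\<^sub>R norm z \<in> K"
      using nz uK wW by (auto simp: K_def W_def z_def inner_add_right inner_commute)
    then have "(z /\<^sub>R norm z) \<bullet> (A *v (z /\<^sub>R norm z)) \<le> q" using umax q_def by blast
    then have "(z \<bullet> (A *v z)) / (norm z)^2 \<le> q"
      by (simp add: matrix_vector_mult_scaleR power2_eq_square divide_inverse mult_ac)
    then have "z \<bullet> (A *v z) \<le> q * (z \<bullet> z)"
      using nz by (simp add: divide_le_eq power2_norm_eq_inner)
    moreover have "z \<bullet> (A *v z) = q + 2 * t * a + t^2 * (w \<bullet> (A *v w))"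
      using sym_inner[OF sym, of w u] wAu inner_commute[of u "A *v w"]
      by (simp add: z_def q_def a_def matrix_vector_right_distrib matrix_vector_mult_scaleR
            inner_add_left inner_add_right power2_eq_square algebra_simps)
    ultimately show ?thesis using zz by (simp add: c_def algebra_simps)
  qed
  have a0: "a = 0"
  proof (rule ccontr)
    assume "a \<noteq> 0"
    then have ap: "a > 0" by (simp add: a_def)
    define t where "t = a / (\<bar>c\<bar> + 1)"
    have tp: "t > 0" using ap by (simp add: t_def)
    have "2 * t * a + t^2 * c \<le> 0" by (rule key)
    then have "t * (2 * a + t * c) \<le> 0" by (simp add: algebra_simps power2_eq_square)
    then have "2 * a + t * c \<le> 0" using tp by (simp add: mult_le_0_iff)
    moreover have "t * c \<ge> - a * (\<bar>c\<bar> / (\<bar>c\<bar> + 1))"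
      unfolding t_def using ap by (auto simp: field_simps abs_if)
    moreover have "\<bar>c\<bar> / (\<bar>c\<bar> + 1) < 1" by simp
    then have "a * (\<bar>c\<bar> / (\<bar>c\<bar> + 1)) < a * 1" using ap by (intro mult_strict_left_mono) auto
    ultimately show False using ap by linarith
  qed
  then have "w = 0" by (simp add: a_def)
  then have "A *v u = q *\<^sub>R u" by (simp add: w_def)
  then show ?thesis using nu uW by blast
qed


lemma eig_family:
  fixes A :: "real^'n^'n" and I :: "'n set"
  assumes sym: "symmetric_mat A" and fin: "finite I"
  shows "\<exists>v l. (\<forall>i\<in>I. norm (v i) = 1 \<and> A *v v i = l i *\<^sub>R v i) \<and>
           (\<forall>i\<in>I. \<forall>j\<in>I. i \<noteq> j \<longrightarrow> v i \<bullet> v j = 0)"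
  using fin
proof (induction I rule: finite_induct)
  case empty
  then show ?case by auto
next
  case (insert a I)
  from insert.IH obtain v l where vl0: "(\<forall>i\<in>I. norm (v i) = 1 \<and> A *v v i = l i *\<^sub>R v i) \<and>
     (\<forall>i\<in>I. \<forall>j\<in>I. i \<noteq> j \<longrightarrow> v i \<bullet> v j = 0)" by (elim exE) 
  have vl: "\<forall>i\<in>I. norm (v i) = 1 \<and> A *v v i = l i *\<^sub>R v i"
     "\<forall>i\<in>I. \<forall>j\<in>I. i \<noteq> j \<longrightarrow> v i \<bullet> v j = 0" using vl0 by simp_all
  have "card (v ` I) \<le> card I" using insert by (simp add: card_image_le)
  also have "card I < card (insert a I)" using insert by simp
  also have "\<dots> \<le> CARD('n)" by (rule card_mono) auto
  finally have c: "card (v ` I) < CARD('n)" .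
  obtain u m where u: "norm u = 1" "\<forall>w\<in>v ` I. u \<bullet> w = 0" "A *v u = m *\<^sub>R u"
  proof -
    have fin: "finite (v ` I)" using insert(1) by simp
    have eg: "\<And>w. w \<in> v ` I \<Longrightarrow> \<exists>m. A *v w = m *\<^sub>R w" using vl by auto
    show ?thesis using eig_step[OF sym fin c eg] that by blast
  qed
  show ?case
  proof (rule exI[of _ "v(a := u)"], rule exI[of _ "l(a := m)"], rule conjI)
    show "\<forall>i\<in>insert a I. norm ((v(a := u)) i) = 1 \<and> A *v (v(a := u)) i = (l(a := m)) i *\<^sub>R (v(a := u)) i"
      using vl u by auto
  next
    show "\<forall>i\<in>insert a I. \<forall>j\<in>insert a I. i \<noteq> j \<longrightarrow> (v(a := u)) i \<bullet> (v(a := u)) j = 0"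
    proof (intro ballI impI)
    fix i j assume ij: "i \<in> insert a I" "j \<in> insert a I" "i \<noteq> j"
    show "(v(a := u)) i \<bullet> (v(a := u)) j = 0"
    proof (cases "i = a")
      case True
      then show ?thesis using ij u(2) by auto
    next
      case False
      then show ?thesis using ij u(2) vl(2) by (auto simp: inner_commute)
    qed
    qed
  qed
qed


definition dg :: "('n \<Rightarrow> real) \<Rightarrow> real^'n^'n" where
  "dg d = (\<chi> i j. if i = j then d i else 0)"

lemma mul_dg: "(A ** dg d) $ i $ j = A $ i $ j * d j"
  unfolding matrix_matrix_mult_def dg_def
  by (simp add: if_distrib[of "\<lambda>x. _ * x"] sum.delta' cong: if_cong)

lemma dg_mul: "(dg d ** A) $ i $ j = d i * A $ i $ j"
  unfolding matrix_matrix_mult_def dg_def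
  by (simp add: if_distrib[of "\<lambda>x. x * _"] sum.delta cong: if_cong)


lemma spectral:
  fixes A :: "real^'n^'n"
  assumes sym: "symmetric_mat A"
  shows "\<exists>U l. orthogonal_matrix U \<and> A = U ** dg l ** transpose U"
proof -
  have "\<exists>(v::'n \<Rightarrow> real^'n) l. (\<forall>i. norm (v i) = 1 \<and> A *v v i = l i *\<^sub>R v i) \<and> (\<forall>i j. i \<noteq> j \<longrightarrow> v i \<bullet> v j = 0)"
    using eig_family[OF sym, of "UNIV :: 'n set"] by simp
  then obtain v :: "'n \<Rightarrow> real^'n" and l where vl0: "(\<forall>i. norm (v i) = 1 \<and> A *v v i = l i *\<^sub>R v i) \<and> (\<forall>i j. i \<noteq> j \<longrightarrow> v i \<bullet> v j = 0)"
    by (elim exE)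
  have vl: "\<And>i. norm (v i) = 1" "\<And>i. A *v v i = l i *\<^sub>R v i"
     "\<And>i j. i \<noteq> j \<Longrightarrow> v i \<bullet> v j = 0" using vl0 by auto
  define U :: "real^'n^'n" where "U = (\<chi> i j. v j $ i)"
  have "transpose U ** U = mat 1"
  proof -
    have "(transpose U ** U) $ i $ j = (if i = j then 1 else 0)" for i j
    proof -
      have "(transpose U ** U) $ i $ j = v i \<bullet> v j"
        by (simp add: U_def matrix_matrix_mult_def transpose_def inner_vec_def)
      then show ?thesis using vl(1)[of i] vl(3)[of i j] by (cases "i = j") (auto simp: norm_eq_1)
    qed
    then show ?thesis by (simp add: vec_eq_iff mat_def)
  qed
  then have oU: "orthogonal_matrix U" by (simp add: orthogonal_matrix)
  have AU: "A ** U = U ** dg l"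
  proof -
    have "(A ** U) $ i $ j = (U ** dg l) $ i $ j" for i j
    proof -
      have "(A ** U) $ i $ j = (A *v v j) $ i"
        by (simp add: U_def matrix_matrix_mult_def matrix_vector_mult_def)
      also have "\<dots> = l j * v j $ i" using vl(2) by simp
      also have "\<dots> = (U ** dg l) $ i $ j"
        by (simp add: mul_dg U_def)
      finally show ?thesis .
    qed
    then show ?thesis by (simp add: vec_eq_iff)
  qed
  have "A = A ** (U ** transpose U)" using oU by (simp add: orthogonal_matrix_def)
  also have "\<dots> = U ** dg l ** transpose U" by (simp add: matrix_mul_assoc AU)
  finally show ?thesis using oU by blast
qed



lemma inner_transpose_left:
  fixes P :: "real^'n^'n"
  shows "x \<bullet> (transpose P *v y) = (P *v x) \<bullet> y"
  using inner_mat_transpose[of P x y] by simp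

lemma qf_conj:
  fixes P A :: "real^'n^'n"
  shows "x \<bullet> ((transpose P ** A ** P) *v x) = (P *v x) \<bullet> (A *v (P *v x))"
  unfolding matrix_vector_mul_assoc[symmetric] by (rule inner_transpose_left)

lemma dg_apply: "dg d *v x = (\<chi> i. d i * x $ i)"
  unfolding matrix_vector_mult_def dg_def
  by (simp add: if_distrib[of "\<lambda>y. y * _"] sum.delta cong: if_cong)

lemma qf_dg: "x \<bullet> (dg d *v x) = (\<Sum>i\<in>UNIV. d i * (x $ i)^2)"
  by (simp add: dg_apply inner_vec_def power2_eq_square mult_ac)

lemma sym_dg: "symmetric_mat (dg d)"
  by (simp add: symmetric_mat_def dg_def transpose_def vec_eq_iff)

lemma sym_conj: "symmetric_mat A \<Longrightarrow> symmetric_mat (transpose P ** A ** P)"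
  by (simp add: symmetric_mat_def matrix_transpose_mul matrix_mul_assoc)

lemma sym_add: "symmetric_mat A \<Longrightarrow> symmetric_mat B \<Longrightarrow> symmetric_mat (A + B)"
  by (simp add: symmetric_mat_def transpose_def vec_eq_iff)

lemma sym_diff: "symmetric_mat A \<Longrightarrow> symmetric_mat B \<Longrightarrow> symmetric_mat (A - B)"
  by (simp add: symmetric_mat_def transpose_def vec_eq_iff)

lemma sym_scale: "symmetric_mat A \<Longrightarrow> symmetric_mat (c *\<^sub>R A)"
  by (simp add: symmetric_mat_def transpose_scalar)

lemma sym_neg: "symmetric_mat A \<Longrightarrow> symmetric_mat (- A)"
  by (simp add: symmetric_mat_def transpose_def vec_eq_iff)

lemma sym_mat1: "symmetric_mat (mat 1 :: real^'n^'n)"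
  by (simp add: symmetric_mat_def)

lemma psd_conj:
  fixes A P :: "real^'n^'n"
  assumes "psd_mat A" shows "psd_mat (transpose P ** A ** P)"
  unfolding psd_mat_def
proof (intro conjI allI)
  show "symmetric_mat (transpose P ** A ** P)" using assms sym_conj psd_mat_def by blast
  fix x :: "real^'n"
  show "0 \<le> x \<bullet> ((transpose P ** A ** P) *v x)"
    unfolding qf_conj using assms psd_mat_def by blast
qed

lemma pd_conj:
  fixes P :: "real^'n^'n"
  assumes "pd_mat A" and "P ** Q = mat 1"
  shows "pd_mat (transpose P ** A ** P)"
proof -
  have "P *v x \<noteq> 0" if "x \<noteq> 0" for x
  proof
    assume "P *v x = 0"
    then have "Q *v (P *v x) = 0" by simp
    moreover have "Q ** P = mat 1" using assms(2) matrix_left_right_inverse by blast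
    ultimately show False using that by (simp add: matrix_vector_mul_assoc)
  qed
  then show ?thesis using assms(1) unfolding pd_mat_def qf_conj by (auto simp: sym_conj)
qed

lemma psd_add: "psd_mat A \<Longrightarrow> psd_mat B \<Longrightarrow> psd_mat (A + B)"
  unfolding psd_mat_def by (auto simp: sym_add matrix_vector_mult_add_rdistrib inner_add_right add_nonneg_nonneg)

lemma psd_scale: "psd_mat A \<Longrightarrow> c \<ge> 0 \<Longrightarrow> psd_mat (c *\<^sub>R A)"
  unfolding psd_mat_def by (auto simp: sym_scale scaleR_matrix_vector_assoc[symmetric])

lemma pd_scale: "pd_mat A \<Longrightarrow> c > 0 \<Longrightarrow> pd_mat (c *\<^sub>R A)"
  unfolding pd_mat_def by (auto simp: sym_scale scaleR_matrix_vector_assoc[symmetric])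

lemma qf_axis: "axis i 1 \<bullet> ((A::real^'n^'n) *v axis i 1) = A $ i $ i"
  by (simp add: matrix_vector_mult_basis inner_axis' column_def)

lemma psd_diag: "psd_mat A \<Longrightarrow> A $ i $ i \<ge> 0"
  unfolding psd_mat_def using qf_axis[of i A] by metis

lemma pd_diag: "pd_mat A \<Longrightarrow> A $ i $ i > 0"
proof -
  have "axis i (1::real) \<noteq> 0" by (simp add: vec_eq_iff axis_def)
  then show "pd_mat A \<Longrightarrow> A $ i $ i > 0" unfolding pd_mat_def using qf_axis[of i A] by metis
qed

lemma psd_dg: "(\<And>i. d i \<ge> 0) \<Longrightarrow> psd_mat (dg d)"
  by (simp add: psd_mat_def sym_dg qf_dg sum_nonneg)

lemma pd_dg:
  fixes d :: "'n::finite \<Rightarrow> real"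
  assumes "\<And>i. d i > 0" shows "pd_mat (dg d)"
proof -
  have "0 < (\<Sum>i\<in>UNIV. d i * (x $ i)^2)" if "x \<noteq> 0" for x :: "real^'n"
  proof -
    obtain j where "x $ j \<noteq> 0" using \<open>x \<noteq> 0\<close> by (auto simp: vec_eq_iff)
    then have "0 < d j * (x $ j)^2" using assms by simp
    also have "\<dots> \<le> (\<Sum>i\<in>UNIV. d i * (x $ i)^2)"
      by (rule member_le_sum) (simp_all add: assms less_imp_le)
    finally show ?thesis .
  qed
  then show ?thesis by (simp add: pd_mat_def sym_dg qf_dg)
qed

lemma orth_conj_eq:
  assumes "orthogonal_matrix U"
  shows "A = U ** D ** transpose U \<longleftrightarrow> transpose U ** A ** U = D"
proof
  assume "A = U ** D ** transpose U"
  then show "transpose U ** A ** U = D" using assms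
    by (simp add: orthogonal_matrix_def matrix_mul_assoc)
       (metis matrix_mul_assoc matrix_mul_lid matrix_mul_rid)
next
  assume "transpose U ** A ** U = D"
  then show "A = U ** D ** transpose U" using assms
    by (simp add: orthogonal_matrix_def matrix_mul_assoc)
       (metis matrix_mul_assoc matrix_mul_lid matrix_mul_rid)
qed

lemma psd_orth_dg:
  assumes "orthogonal_matrix U" "\<And>i. d i \<ge> 0"
  shows "psd_mat (U ** dg d ** transpose U)"
  using psd_conj[OF psd_dg[OF assms(2)], of "transpose U"] by simp

lemma pd_orth_dg:
  assumes "orthogonal_matrix U" "\<And>i. d i > 0"
  shows "pd_mat (U ** dg d ** transpose U)"
  using pd_conj[OF pd_dg[OF assms(2)], of "transpose U" U] assms(1)
  by (simp add: orthogonal_matrix_def)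

lemma det_orth_conj:
  fixes U :: "real^'n^'n"
  assumes "orthogonal_matrix U"
  shows "det (transpose U ** A ** U) = det A"
proof -
  have "det (transpose U) * det U = 1"
    using assms by (metis det_I det_mul orthogonal_matrix_def)
  then show ?thesis by (simp add: det_mul)
qed

lemma trace_orth_conj:
  fixes U :: "real^'n^'n"
  assumes "orthogonal_matrix U"
  shows "trace (transpose U ** A ** U) = trace A"
proof -
  have "trace (transpose U ** A ** U) = trace (A ** U ** transpose U)"
    by (metis trace_mul_sym matrix_mul_assoc)
  also have "\<dots> = trace A" using assms
    by (simp add: orthogonal_matrix_def matrix_mul_assoc[symmetric])
  finally show ?thesis .
qed

lemma det_dg: "det (dg d) = (\<Prod>i\<in>UNIV. d i)"
  by (subst det_diagonal) (auto simp: dg_def)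

lemma trace_dg: "trace (dg d) = (\<Sum>i\<in>UNIV. d i)"
  by (simp add: trace_def dg_def)

lemma dg_dg: "dg a ** dg b = dg (\<lambda>i. a i * b i)"
  by (simp add: vec_eq_iff mul_dg) (simp add: dg_def)

lemma dg_add: "dg a + dg b = dg (\<lambda>i. a i + b i)"
  by (simp add: vec_eq_iff dg_def)

lemma dg_diff: "dg a - dg b = dg (\<lambda>i. a i - b i)"
  by (simp add: vec_eq_iff dg_def)

lemma dg_one: "dg (\<lambda>i. 1) = mat 1"
  by (simp add: vec_eq_iff dg_def mat_def)

lemma pd_spec:
  fixes V :: "real^'n^'n"
  assumes "pd_mat V"
  shows "\<exists>R f. orthogonal_matrix R \<and> V = R ** dg f ** transpose R \<and> (\<forall>i. f i > 0)"
proof -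
  obtain R f where R: "orthogonal_matrix R" "V = R ** dg f ** transpose R"
    using spectral assms pd_mat_def by blast
  then have "transpose R ** V ** R = dg f" using orth_conj_eq by blast
  moreover have "pd_mat (transpose R ** V ** R)"
    using pd_conj[OF assms, of R "transpose R"] R(1) by (simp add: orthogonal_matrix_def)
  ultimately have "\<forall>i. f i > 0" using pd_diag[of "dg f"] by (auto simp: dg_def)
  then show ?thesis using R by blast
qed

lemma pd_det_pos: "pd_mat (V::real^'n^'n) \<Longrightarrow> det V > 0"
proof -
  assume "pd_mat V"
  then obtain R f where R: "orthogonal_matrix R" "V = R ** dg f ** transpose R" "\<forall>i. f i > 0"
    using pd_spec by blast
  then have "transpose R ** V ** R = dg f" using orth_conj_eq by blast
  then have "det V = (\<Prod>i\<in>UNIV. f i)" using det_orth_conj[OF R(1), of V] det_dg by metis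
  then show ?thesis using R(3) by (simp add: prod_pos)
qed

lemma logdet_le:
  fixes V :: "real^'n^'n"
  assumes "pd_mat V"
  shows "ln (det V) \<le> trace V - real CARD('n)"
proof -
  obtain R f where R: "orthogonal_matrix R" "V = R ** dg f ** transpose R" "\<forall>i. f i > 0"
    using pd_spec assms by blast
  then have c: "transpose R ** V ** R = dg f" using orth_conj_eq by blast
  then have d: "det V = (\<Prod>i\<in>UNIV. f i)" using det_orth_conj[OF R(1), of V] det_dg by metis
  have t: "trace V = (\<Sum>i\<in>UNIV. f i)" using c trace_orth_conj[OF R(1), of V] trace_dg by metis
  have nz: "\<And>i. f i \<noteq> 0" using R(3) by (metis less_irrefl)
  have "ln (det V) = (\<Sum>i\<in>UNIV. ln (f i))" by (simp add: d ln_prod nz)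
  also have "\<dots> \<le> (\<Sum>i\<in>UNIV. f i - 1)"
    by (rule sum_mono) (simp add: R(3) ln_le_minus_one)
  also have "\<dots> = trace V - real CARD('n)" by (simp add: t sum_subtractf)
  finally show ?thesis .
qed



lemma mm_diff_l: "(A::real^'n^'n) ** (B - C) = A ** B - A ** C"
  by (simp add: vec_eq_iff matrix_matrix_mult_def sum_subtractf algebra_simps)
lemma mm_diff_r: "((B::real^'n^'n) - C) ** A = B ** A - C ** A"
  by (simp add: vec_eq_iff matrix_matrix_mult_def sum_subtractf algebra_simps)
lemma mm_add_r: "((B::real^'n^'n) + C) ** A = B ** A + C ** A"
  by (simp add: vec_eq_iff matrix_matrix_mult_def sum.distrib algebra_simps)
lemma mm_scale_l: "(c *\<^sub>R (A::real^'n^'n)) ** B = c *\<^sub>R (A ** B)"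
  by (simp add: vec_eq_iff matrix_matrix_mult_def sum_distrib_left algebra_simps)
lemma mm_scale_r: "(A::real^'n^'n) ** (c *\<^sub>R B) = c *\<^sub>R (A ** B)"
  by (simp add: vec_eq_iff matrix_matrix_mult_def sum_distrib_left algebra_simps)

lemma minv_eq:
  fixes A B :: "real^'n^'n"
  assumes "A ** B = mat 1"
  shows "matrix_inv A = B"
  unfolding matrix_inv_def
proof (rule some_equality)
  show "A ** B = mat 1 \<and> B ** A = mat 1" using assms matrix_left_right_inverse by blast
next
  fix A' assume "A ** A' = mat 1 \<and> A' ** A = mat 1"
  then have "A' = A' ** (A ** B)" "A' ** A = mat 1" using assms by auto
  then show "A' = B" by (metis matrix_mul_assoc matrix_mul_lid)
qed

lemma orth_dg_mult:
  fixes U :: "real^'n^'n"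
  assumes "orthogonal_matrix U"
  shows "(U ** dg a ** transpose U) ** (U ** dg b ** transpose U) = U ** dg (\<lambda>i. a i * b i) ** transpose U"
proof -
  have "(U ** dg a ** transpose U) ** (U ** dg b ** transpose U) = U ** dg a ** (transpose U ** U) ** dg b ** transpose U"
    by (simp add: matrix_mul_assoc)
  also have "\<dots> = U ** (dg a ** dg b) ** transpose U"
    using assms by (simp add: orthogonal_matrix_def matrix_mul_assoc)
  finally show ?thesis by (simp add: dg_dg)
qed

lemma orth_dg_add:
  fixes U :: "real^'n^'n"
  shows "U ** dg a ** transpose U + U ** dg b ** transpose U = U ** dg (\<lambda>i. a i + b i) ** transpose U"
  by (simp add: matrix_add_ldistrib mm_add_r dg_add[symmetric])

lemma orth_dg_diff:
  fixes U :: "real^'n^'n"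
  shows "U ** dg a ** transpose U - U ** dg b ** transpose U = U ** dg (\<lambda>i. a i - b i) ** transpose U"
  by (simp add: mm_diff_l mm_diff_r dg_diff[symmetric])

lemma orth_one:
  fixes U :: "real^'n^'n"
  assumes "orthogonal_matrix U"
  shows "mat 1 = U ** dg (\<lambda>i. 1) ** transpose U"
  using assms by (simp add: dg_one orthogonal_matrix_def)

lemma sqrt_unique:
  fixes G T U :: "real^'n^'n"
  assumes oU: "orthogonal_matrix U" and G: "G = U ** dg g ** transpose U" and g: "\<And>i. g i > 0"
    and T: "pd_mat T" "T ** T = G"
  shows "T = U ** dg (\<lambda>i. sqrt (g i)) ** transpose U"
proof -
  define D where "D = dg (\<lambda>i. sqrt (g i))"
  define N where "N = T ** U - U ** D"
  have GU: "G ** U = U ** dg g"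
    using G oU by (simp add: orthogonal_matrix_def matrix_mul_assoc[symmetric])
  have DD: "D ** D = dg g" using g by (simp add: D_def dg_dg less_imp_le)
  have "T ** N + N ** D = T ** T ** U - U ** (D ** D)"
    by (simp add: N_def mm_diff_l mm_diff_r matrix_mul_assoc)
  also have "\<dots> = 0" using GU DD T(2) by simp
  finally have TN: "T ** N = - (N ** D)" by (simp add: eq_neg_iff_add_eq_0)
  have "N $ i $ j = 0" for i j
  proof -
    define n where "n = (\<chi> i. N $ i $ j)"
    have "T *v n = (\<chi> i. (T ** N) $ i $ j)"
      by (simp add: n_def matrix_matrix_mult_def matrix_vector_mult_def)
    also have "\<dots> = (- sqrt (g j)) *\<^sub>R n"
      by (simp add: TN n_def D_def mul_dg vec_eq_iff)
    finally have Tn: "T *v n = (- sqrt (g j)) *\<^sub>R n" .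
    have "n = 0"
    proof (rule ccontr)
      assume "n \<noteq> 0"
      then have "0 < n \<bullet> (T *v n)" using T(1) by (simp add: pd_mat_def)
      also have "\<dots> = - sqrt (g j) * (n \<bullet> n)" by (simp add: Tn)
      also have "\<dots> \<le> 0" using g[of j] by (simp add: less_imp_le)
      finally show False by simp
    qed
    then show ?thesis by (simp add: n_def vec_eq_iff)
  qed
  then have "N = 0" by (simp add: vec_eq_iff)
  then have "T ** U = U ** D" by (simp add: N_def)
  then have "T ** U ** transpose U = U ** D ** transpose U" by simp
  then show ?thesis using oU by (simp add: D_def orthogonal_matrix_def matrix_mul_assoc[symmetric])
qed

lemma mat_sqrt_props:
  fixes G :: "real^'n^'n"
  assumes "pd_mat G"
  shows "pd_mat (mat_sqrt G) \<and> mat_sqrt G ** mat_sqrt G = G"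
proof -
  obtain U g where U: "orthogonal_matrix U" "G = U ** dg g ** transpose U" "\<forall>i. g i > 0"
    using pd_spec[OF assms] by blast
  define S0 where "S0 = U ** dg (\<lambda>i. sqrt (g i)) ** transpose U"
  have P: "pd_mat S0 \<and> S0 ** S0 = G"
  proof
    show "pd_mat S0" unfolding S0_def by (rule pd_orth_dg[OF U(1)]) (simp add: U(3))
    show "S0 ** S0 = G" unfolding S0_def using U
      by (simp add: orth_dg_mult less_imp_le)
  qed
  have "mat_sqrt G = S0" unfolding mat_sqrt_def
  proof (rule the_equality)
    show "pd_mat S0 \<and> S0 ** S0 = G" by (rule P)
    fix T assume "pd_mat T \<and> T ** T = G"
    then show "T = S0" unfolding S0_def using sqrt_unique[OF U(1) U(2)] U(3) by blast
  qed
  then show ?thesis using P by simp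
qed



definition fs :: "real^'n^'n \<Rightarrow> real" where
  "fs A = (\<Sum>i\<in>UNIV. \<Sum>j\<in>UNIV. (A $ i $ j)^2)"

lemma fs_nonneg: "fs A \<ge> 0"
  by (simp add: fs_def sum_nonneg)

lemma frob_le: "frob_norm A \<le> frob_norm B \<longleftrightarrow> fs A \<le> fs B"
  by (simp add: frob_norm_def fs_def[symmetric])

lemma fs_trace: "fs A = trace (transpose A ** A)"
  by (simp add: fs_def trace_def matrix_matrix_mult_def transpose_def power2_eq_square)
     (rule sum.swap)

lemma fs_conj:
  fixes U A :: "real^'n^'n"
  assumes "orthogonal_matrix U"
  shows "fs (transpose U ** A ** U) = fs A"
proof -
  have "transpose (transpose U ** A ** U) ** (transpose U ** A ** U)
      = transpose U ** transpose A ** (U ** transpose U) ** A ** U"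
    by (simp add: matrix_transpose_mul matrix_mul_assoc)
  also have "\<dots> = transpose U ** (transpose A ** A) ** U"
    using assms by (simp add: orthogonal_matrix_def matrix_mul_assoc)
  finally show ?thesis using trace_orth_conj[OF assms] by (simp add: fs_trace)
qed

lemma fs_ge_diag: "fs M \<ge> (\<Sum>i\<in>UNIV. (M $ i $ i)^2)"
  unfolding fs_def by (rule sum_mono, rule member_le_sum) auto

lemma fs_dg: "fs (dg d) = (\<Sum>i\<in>UNIV. (d i)^2)"
  by (simp add: fs_def dg_def if_distrib[of "\<lambda>x. x^2"] sum.delta cong: if_cong)

lemma fs_zero: "fs A = 0 \<Longrightarrow> A = 0"
proof -
  assume "fs A = 0"
  then have "\<forall>i\<in>UNIV. (\<Sum>j\<in>UNIV. (A $ i $ j)^2) = 0"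
    unfolding fs_def by (subst (asm) sum_nonneg_eq_0_iff) (auto intro: sum_nonneg)
  then have "\<forall>i j. (A $ i $ j)^2 = 0"
    by (subst (asm) sum_nonneg_eq_0_iff) auto
  then show "A = 0" by (simp add: vec_eq_iff)
qed

lemma fs_mid: "fs (X - (1/2) *\<^sub>R (P + Q)) = (fs (X - P) + fs (X - Q)) / 2 - fs (P - Q) / 4"
proof -
  have "fs (X - (1/2) *\<^sub>R (P + Q)) = (\<Sum>i\<in>UNIV. \<Sum>j\<in>UNIV.
      ((X - P) $ i $ j)^2 / 2 + ((X - Q) $ i $ j)^2 / 2 - ((P - Q) $ i $ j)^2 / 4)"
    unfolding fs_def by (intro sum.cong refl) (simp add: power2_eq_square field_simps)
  also have "\<dots> = fs (X - P) / 2 + fs (X - Q) / 2 - fs (P - Q) / 4"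
    unfolding fs_def by (simp only: sum.distrib sum_subtractf sum_divide_distrib)
  finally show ?thesis by simp
qed

lemma psd_orth_conj_diff:
  fixes U :: "real^'n^'n"
  shows "transpose U ** (A - B) ** U = transpose U ** A ** U - transpose U ** B ** U"
  by (simp add: mm_diff_l mm_diff_r)

lemma proj_char:
  fixes U X :: "real^'n^'n"
  assumes oU: "orthogonal_matrix U" and X: "X = U ** dg x ** transpose U"
  shows "proj_psd X = U ** dg (\<lambda>i. max (x i) 0) ** transpose U"
proof -
  define P0 where "P0 = U ** dg (\<lambda>i. max (x i) 0) ** transpose U"
  have P0psd: "psd_mat P0" unfolding P0_def by (rule psd_orth_dg[OF oU]) simp
  have XP0: "transpose U ** (X - P0) ** U = dg (\<lambda>i. x i - max (x i) 0)"
    using oU by (simp add: X P0_def orth_dg_diff orth_conj_eq[symmetric])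
  have min: "fs (X - P0) \<le> fs (X - Q)" if Q: "psd_mat Q" for Q
  proof -
    define Q' where "Q' = transpose U ** Q ** U"
    have Q'psd: "psd_mat Q'" unfolding Q'_def by (rule psd_conj[OF Q])
    have XQ: "transpose U ** (X - Q) ** U = dg x - Q'"
      using oU by (simp add: psd_orth_conj_diff Q'_def X orth_conj_eq[symmetric])
    have "fs (X - P0) = (\<Sum>i\<in>UNIV. (x i - max (x i) 0)^2)"
      using fs_conj[OF oU, of "X - P0"] XP0 fs_dg by metis
    also have "\<dots> \<le> (\<Sum>i\<in>UNIV. ((dg x - Q') $ i $ i)^2)"
    proof (rule sum_mono)
      fix i
      define q where "q = Q' $ i $ i"
      have q: "q \<ge> 0" unfolding q_def by (rule psd_diag[OF Q'psd])
      have e: "(dg x - Q') $ i $ i = x i - q" by (simp add: dg_def q_def)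
      show "(x i - max (x i) 0)^2 \<le> ((dg x - Q') $ i $ i)^2"
      proof (cases "x i \<ge> 0")
        case True then show ?thesis by (simp add: e)
      next
        case False
        have h: "(x i - q)^2 - (x i)^2 = q * (q - 2 * x i)" by (simp add: power2_eq_square algebra_simps)
        have "0 \<le> q * (q - 2 * x i)" using q False by simp
        then have "(x i)^2 \<le> (x i - q)^2" using h by linarith
        then show ?thesis using False unfolding e by (simp add: max_def)
      qed
    qed
    also have "\<dots> \<le> fs (dg x - Q')" by (rule fs_ge_diag)
    also have "\<dots> = fs (X - Q)" using fs_conj[OF oU, of "X - Q"] XQ by simp
    finally show ?thesis .
  qed
  have "proj_psd X = P0" unfolding proj_psd_def
  proof (rule the_equality)
    show "psd_mat P0 \<and> (\<forall>Q. psd_mat Q \<longrightarrow> frob_norm (X - P0) \<le> frob_norm (X - Q))"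
      using P0psd min by (simp add: frob_le)
  next
    fix P assume P: "psd_mat P \<and> (\<forall>Q. psd_mat Q \<longrightarrow> frob_norm (X - P) \<le> frob_norm (X - Q))"
    then have Pm: "\<And>Q. psd_mat Q \<Longrightarrow> fs (X - P) \<le> fs (X - Q)" by (simp add: frob_le)
    have "psd_mat ((1/2) *\<^sub>R (P + P0))"
      using P P0psd by (intro psd_scale psd_add) auto
    then have "fs (X - P) \<le> fs (X - (1/2) *\<^sub>R (P + P0))" by (rule Pm)
    moreover have "fs (X - P) \<le> fs (X - P0)" using Pm P0psd by blast
    moreover have "fs (X - P0) \<le> fs (X - P)" using min P by blast
    ultimately have "fs (P - P0) \<le> 0" by (simp add: fs_mid)
    then have "fs (P - P0) = 0" using fs_nonneg[of "P - P0"] by linarith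
    then show "P = P0" using fs_zero by fastforce
  qed
  then show ?thesis by (simp add: P0_def)
qed



lemma core:
  fixes W :: "real^'n^'n" and x :: "'n \<Rightarrow> real"
  assumes W: "pd_mat W" and Wx: "psd_mat (W - dg (\<lambda>i. 1 - x i))"
  defines "e \<equiv> (\<lambda>i. max (x i) 0 + (1 - x i))"
  shows "ln (det W) - trace W \<le> (\<Sum>i\<in>UNIV. ln (e i)) - (\<Sum>i\<in>UNIV. e i)"
proof -
  have e1: "e i \<ge> 1" for i by (simp add: e_def max_def)
  have ep: "e i > 0" for i using e1[of i] by linarith
  define h where "h = (\<lambda>i. 1 / sqrt (e i))"
  define V where "V = dg h ** W ** dg h"
  have "dg h ** dg (\<lambda>i. sqrt (e i)) = mat 1"
    using ep by (simp add: dg_dg h_def dg_one[symmetric] less_imp_neq[symmetric])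
  then have Vpd: "pd_mat V" unfolding V_def
    using pd_conj[OF W, of "dg h" "dg (\<lambda>i. sqrt (e i))"] sym_dg[of h]
    by (simp add: symmetric_mat_def)
  have detW: "det W > 0" by (rule pd_det_pos[OF W])
  have "det V = det W * (\<Prod>i\<in>UNIV. h i)^2"
    by (simp add: V_def det_mul det_dg power2_eq_square)
  also have "(\<Prod>i\<in>UNIV. h i)^2 = (\<Prod>i\<in>UNIV. (h i)^2)" by (simp add: prod_power_distrib)
  also have "\<dots> = (\<Prod>i\<in>UNIV. 1 / e i)"
    using ep by (intro prod.cong refl) (simp add: h_def power_divide less_imp_le)
  finally have dV: "det V = det W * (\<Prod>i\<in>UNIV. 1 / e i)" .
  have nz: "\<And>i. 1 / e i \<noteq> 0" using ep by (simp add: less_imp_neq[symmetric])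
  have lnV: "ln (det V) = ln (det W) - (\<Sum>i\<in>UNIV. ln (e i))"
  proof -
    have enz: "\<And>i. e i \<noteq> 0" using ep by (simp add: less_imp_neq[symmetric])
    have "ln (det V) = ln (det W) + ln (\<Prod>i\<in>UNIV. 1 / e i)"
      unfolding dV by (rule ln_mult_pos[OF detW], rule prod_pos) (simp add: ep)
    also have "ln (\<Prod>i\<in>UNIV. 1 / e i) = (\<Sum>i\<in>UNIV. ln (1 / e i))" by (rule ln_prod) (use nz in auto)
    also have "\<dots> = - (\<Sum>i\<in>UNIV. ln (e i))"
      using ep by (simp add: ln_divide_pos sum_negf)
    finally show ?thesis by simp
  qed
  have Vii: "V $ i $ i = W $ i $ i / e i" for i
    using ep[of i] by (simp add: V_def dg_mul mul_dg h_def power2_eq_square[symmetric] less_imp_le)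
  have trV: "trace V = (\<Sum>i\<in>UNIV. W $ i $ i / e i)" by (simp add: trace_def Vii)
  have "ln (det V) \<le> trace V - real CARD('n)" by (rule logdet_le[OF Vpd])
  then have A: "ln (det W) \<le> (\<Sum>i\<in>UNIV. ln (e i)) + (\<Sum>i\<in>UNIV. W $ i $ i / e i) - real CARD('n)"
    using lnV trV by simp
  have tm: "W $ i $ i / e i - 1 - W $ i $ i + e i \<le> 0" for i
  proof (cases "x i \<ge> 0")
    case True
    then have "e i = 1" by (simp add: e_def)
    then show ?thesis by simp
  next
    case False
    then have ei: "e i = 1 - x i" by (simp add: e_def)
    have "(W - dg (\<lambda>i. 1 - x i)) $ i $ i \<ge> 0" by (rule psd_diag[OF Wx])
    then have Wge: "W $ i $ i \<ge> e i" by (simp add: dg_def ei)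
    have "W $ i $ i / e i - 1 - W $ i $ i + e i = (W $ i $ i - e i) * (1 - e i) / e i"
      using ep[of i] by (simp add: field_simps)
    also have "\<dots> \<le> 0" using Wge e1[of i] ep[of i]
      by (intro divide_nonpos_pos mult_nonneg_nonpos) auto
    finally show ?thesis .
  qed
  have "(\<Sum>i\<in>UNIV. W $ i $ i / e i - 1 - W $ i $ i + e i) \<le> 0"
    using tm by (simp add: sum_nonpos)
  then have B: "(\<Sum>i\<in>UNIV. W $ i $ i / e i) - real CARD('n) - trace W + (\<Sum>i\<in>UNIV. e i) \<le> 0"
    by (simp add: trace_def sum.distrib sum_subtractf)
  show ?thesis using A B by linarith
qed



lemma sym_of_psd: "psd_mat A \<Longrightarrow> symmetric_mat A" by (simp add: psd_mat_def)
lemma sym_of_pd: "pd_mat A \<Longrightarrow> symmetric_mat A" by (simp add: pd_mat_def)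

lemma obj_formula:
  fixes G B S Si Y :: "real^'n^'n" and k :: real
  assumes k: "k > 0" and SSi: "S ** Si = mat 1" and SiS: "Si ** S = mat 1"
    and SG: "S ** S = G" and Gi: "matrix_inv G = Si ** Si"
    and A: "pd_mat (B + (1/k) *\<^sub>R Y)"
  shows "objective k G B Y = k * (ln (det (Si ** (B + (1/k) *\<^sub>R Y) ** Si)) - trace (Si ** (B + (1/k) *\<^sub>R Y) ** Si))
           + k * trace (Si ** B ** Si) + k * ln (det G)"
proof -
  define Am where "Am = B + (1/k) *\<^sub>R Y"
  define Z where "Z = Si ** Am ** Si"
  have Y: "Y = k *\<^sub>R (Am - B)" using k by (simp add: Am_def)
  have "trace (Y ** matrix_inv G) = trace ((Y ** Si) ** Si)" by (simp add: Gi matrix_mul_assoc)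
  also have "\<dots> = trace (Si ** (Y ** Si))" by (rule trace_mul_sym)
  also have "\<dots> = trace (Si ** Y ** Si)" by (simp add: matrix_mul_assoc)
  also have "Si ** Y ** Si = k *\<^sub>R (Z - Si ** B ** Si)"
    by (simp add: Y Z_def mm_scale_l mm_scale_r mm_diff_l mm_diff_r)
  finally have tr: "trace (Y ** matrix_inv G) = k * (trace Z - trace (Si ** B ** Si))"
    by (simp add: trace_def sum_distrib_left sum_subtractf algebra_simps)
  have "S ** Z ** S = (S ** Si) ** Am ** (Si ** S)" by (simp add: Z_def matrix_mul_assoc)
  then have "S ** Z ** S = Am" by (simp add: SSi SiS)
  then have "det Am = det S * det Z * det S" using det_mul[of "S ** Z" S] det_mul[of S Z] by simp
  also have "\<dots> = det G * det Z" using SG det_mul[of S S] by (simp add: mult_ac)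
  finally have dA: "det Am = det G * det Z" .
  have dAp: "det Am > 0" using A by (simp add: Am_def pd_det_pos)
  have "det G \<noteq> 0 \<and> det Z \<noteq> 0" using dA dAp by auto
  have "ln (det Am) = ln (det G) + ln (det Z)"
    using dA \<open>det G \<noteq> 0 \<and> det Z \<noteq> 0\<close> by (simp add: ln_mult)
  then show ?thesis
    unfolding objective_def using tr
    by (simp add: Am_def[symmetric] Z_def[symmetric] algebra_simps)
qed


lemma ln_det_E:
  fixes U :: "real^'n^'n"
  assumes oU: "orthogonal_matrix U" and ep: "\<And>i. e i > 0"
  shows "ln (det (U ** dg e ** transpose U)) - trace (U ** dg e ** transpose U)
       = (\<Sum>i\<in>UNIV. ln (e i)) - (\<Sum>i\<in>UNIV. e i)"
proof -
  have c: "transpose U ** (U ** dg e ** transpose U) ** U = dg e"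
    using orth_conj_eq[OF oU] by blast
  have "det (U ** dg e ** transpose U) = (\<Prod>i\<in>UNIV. e i)"
    using det_orth_conj[OF oU, of "U ** dg e ** transpose U"] c det_dg by metis
  moreover have "trace (U ** dg e ** transpose U) = (\<Sum>i\<in>UNIV. e i)"
    using trace_orth_conj[OF oU, of "U ** dg e ** transpose U"] c trace_dg by metis
  moreover have "ln (\<Prod>i\<in>UNIV. e i) = (\<Sum>i\<in>UNIV. ln (e i))"
    by (rule ln_prod) (use ep in \<open>auto simp: less_imp_neq[symmetric]\<close>)
  ultimately show ?thesis by simp
qed

theorem mainTheorem2:
  fixes G B :: "real^'n^'n" and k :: real
  assumes "k > 0" and "pd_mat G" and "symmetric_mat B"
  defines "Ystar \<equiv> k *\<^sub>R (mat_sqrt G ** proj_psd (mat 1 - matrix_inv (mat_sqrt G) ** B ** matrix_inv (mat_sqrt G)) ** mat_sqrt G)"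
  shows "feasible k B Ystar \<and> (\<forall>Y. feasible k B Y \<longrightarrow> objective k G B Y \<le> objective k G B Ystar)"
proof -
  note k = assms(1) and symB = assms(3)
  define S where "S = mat_sqrt G"
  have Spd: "pd_mat S" and SS: "S ** S = G" using mat_sqrt_props[OF assms(2)] by (auto simp: S_def)
  have symS: "transpose S = S" using Spd by (simp add: pd_mat_def symmetric_mat_def)
  have "det S \<noteq> 0" using pd_det_pos[OF Spd] by simp
  then have "invertible S" by (simp add: invertible_det_nz)
  then obtain S' where S': "S ** S' = mat 1" unfolding invertible_def by blast
  define Si where "Si = matrix_inv S"
  have SSi: "S ** Si = mat 1" using minv_eq[OF S'] S' by (simp add: Si_def)
  have SiS: "Si ** S = mat 1" using SSi matrix_left_right_inverse by blast
  have "S ** transpose Si = mat 1"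
    using arg_cong[OF SiS, of transpose] by (simp add: matrix_transpose_mul symS)
  then have symSi: "transpose Si = Si" using minv_eq by (metis Si_def)
  have "G ** (Si ** Si) = S ** (S ** Si) ** Si" by (simp add: SS[symmetric] matrix_mul_assoc)
  then have "G ** (Si ** Si) = mat 1" by (simp add: SSi SiS)
  then have Gi: "matrix_inv G = Si ** Si" by (rule minv_eq)
  define X0 where "X0 = mat 1 - Si ** B ** Si"
  have symSBS: "symmetric_mat (Si ** B ** Si)"
    using sym_conj[OF symB, of Si] symSi by simp
  have symX0: "symmetric_mat X0" unfolding X0_def by (intro sym_diff sym_mat1 symSBS)
  obtain U x where oU: "orthogonal_matrix U" and X0eq: "X0 = U ** dg x ** transpose U"
    using spectral[OF symX0] by blast
  define P0 where "P0 = U ** dg (\<lambda>i. max (x i) 0) ** transpose U"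
  have proj: "proj_psd X0 = P0" unfolding P0_def by (rule proj_char[OF oU X0eq])
  have Ystar_eq: "Ystar = k *\<^sub>R (S ** P0 ** S)"
    using Ystar_def by (simp add: S_def[symmetric] Si_def[symmetric] X0_def[symmetric] proj)
  define e where "e = (\<lambda>i. max (x i) 0 + (1 - x i))"
  have ep: "e i > 0" for i by (simp add: e_def max_def)
  define E where "E = U ** dg e ** transpose U"
  have "mat 1 - X0 = U ** dg (\<lambda>i. 1) ** transpose U - U ** dg x ** transpose U"
    unfolding X0eq by (subst orth_one[OF oU]) (rule refl)
  also have "\<dots> = U ** dg (\<lambda>i. 1 - x i) ** transpose U" by (rule orth_dg_diff)
  finally have one: "mat 1 - X0 = U ** dg (\<lambda>i. 1 - x i) ** transpose U" .
  have EP: "E = P0 + Si ** B ** Si"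
    using one orth_dg_add[of U "\<lambda>i. max (x i) 0" "\<lambda>i. 1 - x i"]
    by (simp add: E_def P0_def e_def X0_def)
  have Epd: "pd_mat E" unfolding E_def by (rule pd_orth_dg[OF oU ep])
  have P0psd: "psd_mat P0" unfolding P0_def by (rule psd_orth_dg[OF oU]) simp
  have Bexp: "S ** (Si ** B ** Si) ** S = B"
  proof -
    have "S ** (Si ** B ** Si) ** S = (S ** Si) ** B ** (Si ** S)" by (simp add: matrix_mul_assoc)
    then show ?thesis by (simp add: SSi SiS)
  qed
  have kY: "(1/k) *\<^sub>R Ystar = S ** P0 ** S" using k by (simp add: Ystar_eq)
  have AE: "B + (1/k) *\<^sub>R Ystar = S ** E ** S"
    by (simp add: kY EP matrix_add_ldistrib mm_add_r Bexp)
  have SES: "pd_mat (S ** E ** S)"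
    using pd_conj[OF Epd, of S Si] SSi symS by simp
  have ZE: "Si ** (B + (1/k) *\<^sub>R Ystar) ** Si = E"
  proof -
    have "Si ** (S ** E ** S) ** Si = (Si ** S) ** E ** (S ** Si)" by (simp add: matrix_mul_assoc)
    then show ?thesis by (simp add: AE SSi SiS)
  qed
  have feasY: "feasible k B Ystar"
    unfolding feasible_def loewner_less_def
  proof (intro conjI)
    show psdY: "psd_mat Ystar" unfolding Ystar_eq
      using psd_scale[OF psd_conj[OF P0psd, of S]] k symS by simp
    then show "symmetric_mat Ystar" by (rule sym_of_psd)
    show "symmetric_mat (- (k *\<^sub>R B))" by (intro sym_neg sym_scale symB)
    have "Ystar - - (k *\<^sub>R B) = k *\<^sub>R (B + (1/k) *\<^sub>R Ystar)" using k by (simp add: algebra_simps)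
    then show "pd_mat (Ystar - - (k *\<^sub>R B))" using pd_scale[OF SES k] by (simp add: AE)
  qed
  have objY: "objective k G B Ystar = k * ((\<Sum>i\<in>UNIV. ln (e i)) - (\<Sum>i\<in>UNIV. e i))
           + k * trace (Si ** B ** Si) + k * ln (det G)"
    using obj_formula[OF k SSi SiS SS Gi, of B Ystar] AE SES ZE ln_det_E[OF oU ep]
    by (simp add: E_def)
  have opt: "objective k G B Y \<le> objective k G B Ystar" if fY: "feasible k B Y" for Y
  proof -
    have Ypsd: "psd_mat Y" and Ypd: "pd_mat (Y - - (k *\<^sub>R B))"
      using fY by (auto simp: feasible_def loewner_less_def)
    define A where "A = B + (1/k) *\<^sub>R Y"
    have "A = (1/k) *\<^sub>R (Y - - (k *\<^sub>R B))" using k by (simp add: A_def algebra_simps)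
    then have Apd: "pd_mat A" using pd_scale[OF Ypd, of "1/k"] k by simp
    define Z where "Z = Si ** A ** Si"
    define W where "W = transpose U ** Z ** U"
    have Zpd: "pd_mat Z" unfolding Z_def using pd_conj[OF Apd, of Si S] SiS symSi by simp
    have Wpd: "pd_mat W" unfolding W_def
      using pd_conj[OF Zpd, of U "transpose U"] oU by (simp add: orthogonal_matrix_def)
    have "Z - (mat 1 - X0) = Si ** ((1/k) *\<^sub>R Y) ** Si"
      by (simp add: Z_def X0_def A_def matrix_add_ldistrib mm_add_r)
    then have ZX: "psd_mat (Z - (mat 1 - X0))"
      using psd_conj[OF psd_scale[OF Ypsd, of "1/k"], of Si] k symSi by simp
    have "W - dg (\<lambda>i. 1 - x i) = transpose U ** (Z - (mat 1 - X0)) ** U"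
      using orth_conj_eq[OF oU] one by (simp add: W_def psd_orth_conj_diff)
    then have WX: "psd_mat (W - dg (\<lambda>i. 1 - x i))" using psd_conj[OF ZX, of U] by simp
    have c: "ln (det W) - trace W \<le> (\<Sum>i\<in>UNIV. ln (e i)) - (\<Sum>i\<in>UNIV. e i)"
      using core[OF Wpd WX] by (simp add: e_def)
    have dW: "det W = det Z" unfolding W_def by (rule det_orth_conj[OF oU])
    have tW: "trace W = trace Z" unfolding W_def by (rule trace_orth_conj[OF oU])
    have objYY: "objective k G B Y = k * (ln (det Z) - trace Z)
           + k * trace (Si ** B ** Si) + k * ln (det G)"
      using obj_formula[OF k SSi SiS SS Gi, of B Y] Apd by (simp add: Z_def A_def)
    have "k * (ln (det Z) - trace Z) \<le> k * ((\<Sum>i\<in>UNIV. ln (e i)) - (\<Sum>i\<in>UNIV. e i))"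
      using c dW tW k by (intro mult_left_mono) auto
    then show ?thesis using objYY objY by linarith
  qed
  show ?thesis using feasY opt by blast
qed

end
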